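(* Let $L$ be the operator on $l^2$ mapping $(\xi_1,\xi_2,\xi_3,\dots)$ to $(0,\dots,0,\xi_{k+1},\xi_{k+2},\dots)$ (first $k$ entries replaced by $0$), and let $Y$ be a bounded operator on $l^2$ such that (1) $(\xi,Y\xi)\ge0$ for all $\xi\in l^2$, and (2) if $L\xi=0$ and $(\xi,Y\xi)=0$ then $\xi=0$. Then there exists $\kappa>0$ such that $(\xi,(L+Y)\xi)\ge\kappa(\xi,\xi)$ for all $\xi\in l^2$.
   Context: $l^2$ is the Hilbert space of complex square-summable sequences with inner product $(\xi,\eta)=\sum_j\bar\xi_j\eta_j$; $k$ is a fixed nonnegative integer. *)

theory Defs
  imports "HOL-Analysis.Analysis" "HOL-Library.Complex_Order"
begin

text \<open>The Hilbert space l2 of complex square-summable sequences, indexed from 0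
  (index j here corresponds to xi_(j+1) in the paper).\<close>

definition l2 :: "(nat \<Rightarrow> complex) set" where
  "l2 = {x. summable (\<lambda>j. (cmod (x j))^2)}"

definition l2_inner :: "(nat \<Rightarrow> complex) \<Rightarrow> (nat \<Rightarrow> complex) \<Rightarrow> complex" where
  "l2_inner x y = (\<Sum>j. cnj (x j) * y j)"

definition l2_norm :: "(nat \<Rightarrow> complex) \<Rightarrow> real" where
  "l2_norm x = sqrt (\<Sum>j. (cmod (x j))^2)"

definition bounded_op :: "((nat \<Rightarrow> complex) \<Rightarrow> (nat \<Rightarrow> complex)) \<Rightarrow> bool" where
  "bounded_op T \<longleftrightarrow>
     (\<forall>x\<in>l2. T x \<in> l2) \<and>
     (\<forall>x\<in>l2. \<forall>y\<in>l2. T (\<lambda>j. x j + y j) = (\<lambda>j. T x j + T y j)) \<and>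
     (\<forall>c. \<forall>x\<in>l2. T (\<lambda>j. c * x j) = (\<lambda>j. c * T x j)) \<and>
     (\<exists>C. \<forall>x\<in>l2. l2_norm (T x) \<le> C * l2_norm x)"

definition Lop :: "nat \<Rightarrow> (nat \<Rightarrow> complex) \<Rightarrow> (nat \<Rightarrow> complex)" where
  "Lop k x = (\<lambda>j. if j < k then 0 else x j)"

end

theory Submission
  imports Defs
begin

definition NN :: "(nat \<Rightarrow> complex) \<Rightarrow> real" where
  "NN x = (\<Sum>j. (cmod (x j))^2)"

lemma l2_mono:
  assumes "x \<in> l2" "\<And>j. cmod (y j) \<le> cmod (x j)"
  shows "y \<in> l2"
proof -
  have "summable (\<lambda>j. (cmod (x j))^2)" using assms(1) by (simp add: l2_def)
  moreover have "\<And>j. norm ((cmod (y j))^2) \<le> (cmod (x j))^2"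
    using assms(2) by (simp add: power_mono)
  ultimately show ?thesis unfolding l2_def
    using summable_comparison_test by (metis (no_types, lifting) mem_Collect_eq)
qed

lemma l2_add:
  assumes "x \<in> l2" "y \<in> l2"
  shows "(\<lambda>j. x j + y j) \<in> l2"
proof -
  have s: "summable (\<lambda>j. 2*(cmod (x j))^2 + 2*(cmod (y j))^2)"
    using assms by (intro summable_add summable_mult) (auto simp: l2_def)
  have "norm ((cmod (x j + y j))^2) \<le> 2*(cmod (x j))^2 + 2*(cmod (y j))^2" for j
  proof -
    have "cmod (x j + y j) \<le> cmod (x j) + cmod (y j)" by (rule norm_triangle_ineq)
    hence "(cmod (x j + y j))^2 \<le> (cmod (x j) + cmod (y j))^2" by (simp add: power_mono)
    also have "\<dots> \<le> 2*(cmod (x j))^2 + 2*(cmod (y j))^2"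
      by (smt (verit) sum_squares_ge_zero power2_sum zero_le_power2 power2_diff)
    finally show ?thesis by simp
  qed
  then show ?thesis unfolding l2_def by (auto intro!: summable_comparison_test'[OF s])
qed

lemma l2_finite:
  assumes "\<And>j. j \<ge> k \<Longrightarrow> a j = 0"
  shows "a \<in> l2"
  unfolding l2_def using assms
  by (auto intro!: summable_finite[of "{..<k}"]) (meson not_le)

lemma l2_scale: "x \<in> l2 \<Longrightarrow> (\<lambda>j. c * x j) \<in> l2"
  unfolding l2_def by (auto simp: norm_mult power_mult_distrib intro: summable_mult)

lemma summable_l2: "x \<in> l2 \<Longrightarrow> summable (\<lambda>j. (cmod (x j))^2)"
  by (simp add: l2_def)

lemma NN_nonneg: "x \<in> l2 \<Longrightarrow> 0 \<le> NN x"
  unfolding NN_def by (simp add: suminf_nonneg summable_l2)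

lemma termwise: "0 < e \<Longrightarrow> (a::real) * b \<le> e/2 * a^2 + b^2/(2*e)"
proof -
  assume e: "0 < e"
  have "0 \<le> (e*a - b)^2" by simp
  hence "2*e*(a*b) \<le> e^2*a^2 + b^2" by (simp add: power2_diff algebra_simps power2_eq_square)
  hence "a*b \<le> (e^2*a^2 + b^2)/(2*e)" using e by (simp add: field_simps)
  also have "\<dots> = e/2 * a^2 + b^2/(2*e)" using e by (simp add: field_simps power2_eq_square)
  finally show ?thesis .
qed

lemma summable_prod:
  assumes "x \<in> l2" "y \<in> l2"
  shows "summable (\<lambda>j. cmod (x j) * cmod (y j))" "summable (\<lambda>j. cnj (x j) * y j)"
proof -
  have s: "summable (\<lambda>j. 1/2 * (cmod (x j))^2 + (cmod (y j))^2/(2*1))"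
    using assms by (intro summable_add summable_mult summable_divide) (auto simp: l2_def)
  have "norm (cmod (x j) * cmod (y j)) \<le> 1/2 * (cmod (x j))^2 + (cmod (y j))^2/(2*1)" for j
    using termwise[of 1 "cmod (x j)" "cmod (y j)"] by simp
  then show s1: "summable (\<lambda>j. cmod (x j) * cmod (y j))" by (auto intro!: summable_comparison_test'[OF s])
  show "summable (\<lambda>j. cnj (x j) * y j)"
    by (rule summable_norm_cancel) (use s1 in \<open>simp add: norm_mult\<close>)
qed

lemma inner_bound:
  assumes "x \<in> l2" "y \<in> l2" "0 < e"
  shows "cmod (l2_inner x y) \<le> e/2 * NN x + NN y/(2*e)"
proof -
  have s: "summable (\<lambda>j. e/2 * (cmod (x j))^2 + (cmod (y j))^2/(2*e))"
    using assms by (intro summable_add summable_mult summable_divide) (auto simp: l2_def)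
  have "cmod (l2_inner x y) \<le> (\<Sum>j. norm (cnj (x j) * y j))"
    unfolding l2_inner_def
    by (rule summable_norm) (use summable_prod(1)[OF assms(1,2)] in \<open>simp add: norm_mult\<close>)
  also have "\<dots> \<le> (\<Sum>j. e/2 * (cmod (x j))^2 + (cmod (y j))^2/(2*e))"
    apply (rule suminf_le)
    using termwise[OF assms(3)] summable_prod(1)[OF assms(1,2)] s by (auto simp: norm_mult)
  also have "\<dots> = e/2 * NN x + NN y/(2*e)"
  proof -
    have a: "summable (\<lambda>j. e/2 * (cmod (x j))^2)" "summable (\<lambda>j. (cmod (y j))^2/(2*e))"
      using assms by (auto simp: l2_def intro!: summable_mult summable_divide)
    show ?thesis
      using suminf_add[OF a] suminf_mult[OF summable_l2[OF assms(1)], of "e/2"] suminf_divide[OF summable_l2[OF assms(2)], of "2*e"]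
      unfolding NN_def by simp
  qed
  finally show ?thesis .
qed

lemma inner_add_right:
  assumes "x \<in> l2" "y \<in> l2" "z \<in> l2"
  shows "l2_inner x (\<lambda>j. y j + z j) = l2_inner x y + l2_inner x z"
  unfolding l2_inner_def using summable_prod(2)[OF assms(1,2)] summable_prod(2)[OF assms(1,3)]
  by (simp add: distrib_left suminf_add)

lemma inner_add_left:
  assumes "x \<in> l2" "y \<in> l2" "z \<in> l2"
  shows "l2_inner (\<lambda>j. x j + y j) z = l2_inner x z + l2_inner y z"
  unfolding l2_inner_def using summable_prod(2)[OF assms(1,3)] summable_prod(2)[OF assms(2,3)]
  by (simp add: distrib_right suminf_add)

lemma cnj_self: "cnj z * z = complex_of_real ((cmod z)^2)"
  by (metis complex_norm_square mult.commute complex_mult_cnj of_real_power)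

lemma inner_self: "x \<in> l2 \<Longrightarrow> l2_inner x x = complex_of_real (NN x)"
  unfolding l2_inner_def NN_def cnj_self
  by (simp add: suminf_of_real summable_l2)

definition ee :: "nat \<Rightarrow> nat \<Rightarrow> complex" where
  "ee j = (\<lambda>i. if i = j then 1 else 0)"

lemma ee_l2: "ee j \<in> l2"
  by (rule l2_finite[of "Suc j"]) (auto simp: ee_def)

lemma Y_scale: "bounded_op Y \<Longrightarrow> x \<in> l2 \<Longrightarrow> Y (\<lambda>j. c * x j) = (\<lambda>j. c * Y x j)"
  unfolding bounded_op_def by blast

lemma Y_add: "bounded_op Y \<Longrightarrow> x \<in> l2 \<Longrightarrow> y \<in> l2 \<Longrightarrow> Y (\<lambda>j. x j + y j) = (\<lambda>j. Y x j + Y y j)"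
  unfolding bounded_op_def by blast

lemma Y_l2: "bounded_op Y \<Longrightarrow> x \<in> l2 \<Longrightarrow> Y x \<in> l2"
  unfolding bounded_op_def by blast

lemma Y_zero:
  assumes "bounded_op Y" shows "Y (\<lambda>_. 0) = (\<lambda>_. 0)"
proof -
  have z: "(\<lambda>_. 0) \<in> l2" by (rule l2_finite[of 0]) auto
  show ?thesis using Y_scale[OF assms z, of 0] by simp
qed

lemma Y_sum:
  assumes "bounded_op Y"
  shows "Y (\<lambda>i. \<Sum>j<n. a j * ee j i) = (\<lambda>i. \<Sum>j<n. a j * Y (ee j) i)"
proof (induction n)
  case 0
  then show ?case using Y_zero[OF assms] by simp
next
  case (Suc n)
  have l1: "(\<lambda>i. \<Sum>j<n. a j * ee j i) \<in> l2"
    by (rule l2_finite[of n]) (auto simp: ee_def)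
  have l2': "(\<lambda>i. a n * ee n i) \<in> l2" by (rule l2_scale[OF ee_l2])
  have "Y (\<lambda>i. \<Sum>j<Suc n. a j * ee j i) = Y (\<lambda>i. (\<Sum>j<n. a j * ee j i) + a n * ee n i)"
    by simp
  also have "\<dots> = (\<lambda>i. Y (\<lambda>i. \<Sum>j<n. a j * ee j i) i + Y (\<lambda>i. a n * ee n i) i)"
    by (rule Y_add[OF assms l1 l2'])
  also have "Y (\<lambda>i. a n * ee n i) = (\<lambda>i. a n * Y (ee n) i)"
    by (rule Y_scale[OF assms ee_l2])
  finally show ?case using Suc by simp
qed

definition QQ :: "nat \<Rightarrow> ((nat \<Rightarrow> complex) \<Rightarrow> (nat \<Rightarrow> complex)) \<Rightarrow> (nat \<Rightarrow> complex) \<Rightarrow> complex" where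
  "QQ k Y a = (\<Sum>i<k. cnj (a i) * (\<Sum>j<k. a j * Y (ee j) i))"

lemma supp_repr:
  assumes "\<And>j. j \<ge> k \<Longrightarrow> a j = 0"
  shows "(\<lambda>i. \<Sum>j<k. a j * ee j i) = a"
proof
  fix i
  have "(\<Sum>j<k. a j * ee j i) = (\<Sum>j<k. if j = i then a i else 0)"
    by (rule sum.cong) (auto simp: ee_def)
  also have "\<dots> = a i" using assms[of i] by (auto simp: not_less)
  finally show "(\<Sum>j<k. a j * ee j i) = a i" .
qed

lemma q_QQ:
  assumes "bounded_op Y" "\<And>j. j \<ge> k \<Longrightarrow> a j = 0"
  shows "l2_inner a (Y a) = QQ k Y a"
proof -
  have Ya: "Y a = (\<lambda>i. \<Sum>j<k. a j * Y (ee j) i)"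
    using Y_sum[OF assms(1), where n=k and a=a] supp_repr[where k=k and a=a] assms(2) by simp
  have "l2_inner a (Y a) = (\<Sum>i<k. cnj (a i) * Y a i)"
    unfolding l2_inner_def by (rule suminf_finite) (use assms(2) in \<open>auto simp: not_less\<close>)
  then show ?thesis unfolding QQ_def Ya by simp
qed

lemma NN_supp:
  assumes "\<And>j. j \<ge> k \<Longrightarrow> a j = 0"
  shows "NN a = (\<Sum>j<k. (cmod (a j))^2)"
  unfolding NN_def by (rule suminf_finite) (use assms in \<open>auto simp: not_less\<close>)

lemma cont_QQ: "continuous_on UNIV (\<lambda>a. Re (QQ k Y a))"
  unfolding QQ_def by (intro continuous_intros continuous_on_product_coordinates)

lemma QQ_scale: "QQ k Y (\<lambda>j. c * u j) = cnj c * c * QQ k Y u"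
  unfolding QQ_def by (simp add: sum_distrib_left mult_ac)

lemma fin_min:
  assumes bY: "bounded_op Y"
    and pos: "\<forall>\<xi>\<in>l2. l2_inner \<xi> (Y \<xi>) \<ge> 0"
    and dfn: "\<forall>\<xi>\<in>l2. Lop k \<xi> = (\<lambda>_. 0) \<and> l2_inner \<xi> (Y \<xi>) = 0 \<longrightarrow> \<xi> = (\<lambda>_. 0)"
  shows "\<exists>m>0. \<forall>a. (\<forall>j. j \<ge> k \<longrightarrow> a j = 0) \<longrightarrow> m * NN a \<le> Re (QQ k Y a)"
proof -
  define B where "B i = (if i < k then cball 0 1 else {0::complex})" for i
  define g where "g a = (\<Sum>j<k. (cmod (a j))^2)" for a :: "nat \<Rightarrow> complex"
  define K where "K = Pi UNIV B \<inter> {a. g a = 1}"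
  have "compactin (product_topology (\<lambda>i. euclidean) UNIV) (PiE UNIV B)"
    by (simp add: compactin_PiE B_def)
  hence "compact (PiE UNIV B)"
    by (simp add: euclidean_product_topology)
  hence c1: "compact (Pi UNIV B)" by (simp add: PiE_UNIV_domain)
  have "closed {a. g a = 1}" unfolding g_def
    by (intro closed_Collect_eq continuous_intros continuous_on_product_coordinates)
  hence cK: "compact K" unfolding K_def using c1 by blast
  have scale: "\<exists>u\<in>K. QQ k Y a = (NN a) * QQ k Y u \<and> NN a > 0"
    if supp: "\<forall>j. j \<ge> k \<longrightarrow> a j = 0" and nz: "a \<noteq> (\<lambda>_. 0)" for a
  proof -
    obtain i where i: "a i \<noteq> 0" using nz by auto
    hence ik: "i < k" using supp by (meson not_le)
    have NNg: "NN a = g a" unfolding g_def by (rule NN_supp) (use supp in auto)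
    have gp: "g a > 0" unfolding g_def
      by (rule sum_pos2[of _ i]) (use i ik in auto)
    define s where "s = sqrt (g a)"
    have sp: "s > 0" using gp by (simp add: s_def)
    have s2: "s^2 = g a" using gp by (simp add: s_def)
    define u where "u j = a j / complex_of_real s" for j
    have au: "a = (\<lambda>j. complex_of_real s * u j)" using sp by (auto simp: u_def)
    have gu: "g u = 1"
    proof -
      have "g u = (\<Sum>j<k. (cmod (a j))^2 / s^2)"
        unfolding g_def u_def using sp by (simp add: norm_divide power_divide)
      also have "\<dots> = g a / s^2" unfolding g_def by (simp add: sum_divide_distrib)
      finally show ?thesis using s2 gp by simp
    qed
    have uB: "u \<in> Pi UNIV B"
    proof
      fix j
      show "u j \<in> B j"
      proof (cases "j < k")
        case True
        have "(cmod (u j))^2 \<le> g u" unfolding g_def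
          by (rule member_le_sum) (use True in auto)
        hence "cmod (u j) \<le> 1" using gu by (simp add: power_le_one_iff abs_square_le_1)
        then show ?thesis using True by (simp add: B_def)
      next
        case False
        then show ?thesis using supp by (simp add: B_def u_def)
      qed
    qed
    have "QQ k Y a = cnj (complex_of_real s) * complex_of_real s * QQ k Y u"
      by (subst au) (rule QQ_scale)
    also have "cnj (complex_of_real s) * complex_of_real s = complex_of_real (NN a)"
      using s2 NNg by (simp flip: of_real_mult add: power2_eq_square)
    finally show ?thesis using uB gu gp NNg by (auto simp: K_def)
  qed
  show ?thesis
  proof (cases "K = {}")
    case True
    show ?thesis
    proof (intro exI[of _ 1] conjI allI impI)
      fix a :: "nat \<Rightarrow> complex" assume supp: "\<forall>j. k \<le> j \<longrightarrow> a j = 0"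
      have "a = (\<lambda>_. 0)" using scale[OF supp] True by blast
      then show "1 * NN a \<le> Re (QQ k Y a)" by (simp add: NN_def QQ_def)
    qed simp
  next
    case False
    have cQ: "continuous_on K (\<lambda>a. Re (QQ k Y a))"
      using cont_QQ continuous_on_subset by blast
    obtain a0 where a0: "a0 \<in> K" and amin: "\<And>u. u \<in> K \<Longrightarrow> Re (QQ k Y a0) \<le> Re (QQ k Y u)"
      using continuous_attains_inf[OF cK False cQ] by blast
    have supp0: "\<And>j. j \<ge> k \<Longrightarrow> a0 j = 0" using a0 unfolding K_def B_def Pi_def by (metis (no_types, lifting) IntD1 UNIV_I mem_Collect_eq not_le singletonD)
    have l0: "a0 \<in> l2" by (rule l2_finite) (rule supp0)
    have q0: "l2_inner a0 (Y a0) = QQ k Y a0" by (rule q_QQ[OF bY]) (rule supp0)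
    have ge: "0 \<le> QQ k Y a0" using pos l0 q0 by auto
    have mpos: "Re (QQ k Y a0) > 0"
    proof (rule ccontr)
      assume "\<not> 0 < Re (QQ k Y a0)"
      hence "QQ k Y a0 = 0" using ge by (simp add: less_eq_complex_def complex_eq_iff)
      moreover have "Lop k a0 = (\<lambda>_. 0)" using supp0 by (auto simp: Lop_def)
      ultimately have "a0 = (\<lambda>_. 0)" using dfn l0 q0 by auto
      thus False using a0 by (simp add: K_def g_def)
    qed
    show ?thesis
    proof (intro exI[of _ "Re (QQ k Y a0)"] conjI allI impI mpos)
      fix a :: "nat \<Rightarrow> complex" assume supp: "\<forall>j. k \<le> j \<longrightarrow> a j = 0"
      show "Re (QQ k Y a0) * NN a \<le> Re (QQ k Y a)"
      proof (cases "a = (\<lambda>_. 0)")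
        case True
        then show ?thesis by (simp add: NN_def QQ_def)
      next
        case False
        then obtain u where u: "u \<in> K" "QQ k Y a = NN a * QQ k Y u" "NN a > 0"
          using scale[OF supp] by blast
        have "Re (QQ k Y a) = NN a * Re (QQ k Y u)" using u(2) by simp
        moreover have "Re (QQ k Y a0) \<le> Re (QQ k Y u)" by (rule amin[OF u(1)])
        ultimately show ?thesis using u(3) by (simp add: mult.commute mult_left_mono)
      qed
    qed
  qed
qed

lemma NN_Y:
  assumes "bounded_op Y"
  obtains C where "\<And>x. x \<in> l2 \<Longrightarrow> NN (Y x) \<le> C^2 * NN x"
proof -
  obtain C where C: "\<forall>x\<in>l2. l2_norm (Y x) \<le> C * l2_norm x"
    using assms unfolding bounded_op_def by blast
  have "NN (Y x) \<le> C^2 * NN x" if x: "x \<in> l2" for x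
  proof -
    have n1: "0 \<le> NN (Y x)" by (rule NN_nonneg[OF Y_l2[OF assms x]])
    have n2: "0 \<le> NN x" by (rule NN_nonneg[OF x])
    have "sqrt (NN (Y x)) \<le> C * sqrt (NN x)"
      using C x unfolding l2_norm_def NN_def by auto
    hence "(sqrt (NN (Y x)))^2 \<le> (C * sqrt (NN x))^2"
      by (rule power_mono) (use n1 in simp)
    thus ?thesis by (simp add: power_mult_distrib real_sqrt_pow2[OF n1] real_sqrt_pow2[OF n2])
  qed
  then show ?thesis using that by blast
qed

lemma Lop_inner:
  assumes "x \<in> l2"
  shows "l2_inner x (Lop k x) = complex_of_real (NN (Lop k x))"
proof -
  have l: "Lop k x \<in> l2" by (rule l2_mono[OF assms]) (simp add: Lop_def)
  have "l2_inner x (Lop k x) = l2_inner (Lop k x) (Lop k x)"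
    unfolding l2_inner_def by (rule arg_cong[where f=suminf]) (auto simp: Lop_def)
  then show ?thesis using inner_self[OF l] by simp
qed

lemma lin_aux:
  fixes r p q1 q2 q3 q4 c1 c2 mX EZ DZm DZm2 a2 a4 a8 :: real
  shows "-c1 \<le> q2 \<Longrightarrow> -c2 \<le> q3 \<Longrightarrow> DZm = EZ/3 \<Longrightarrow> DZm2 = 2*(EZ/3) \<Longrightarrow> r = q1 + q2 + (q3 + q4)
   \<Longrightarrow> a2 = mX/2 \<Longrightarrow> a4 = mX/4 \<Longrightarrow> a8 = mX/8 \<Longrightarrow> 0 \<le> mX \<Longrightarrow> mX \<le> q1 \<Longrightarrow> 0 \<le> q4 \<Longrightarrow> c1 \<le> a4 + DZm
   \<Longrightarrow> c2 \<le> DZm2 + a8 \<Longrightarrow> a2 - EZ \<le> r"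
  by linarith

theorem lemma1:
  fixes k :: nat and Y :: "(nat \<Rightarrow> complex) \<Rightarrow> (nat \<Rightarrow> complex)"
  assumes "bounded_op Y"
    and "\<forall>\<xi>\<in>l2. l2_inner \<xi> (Y \<xi>) \<ge> 0"
    and "\<forall>\<xi>\<in>l2. Lop k \<xi> = (\<lambda>_. 0) \<and> l2_inner \<xi> (Y \<xi>) = 0 \<longrightarrow> \<xi> = (\<lambda>_. 0)"
  shows "\<exists>\<kappa>::real. \<kappa> > 0 \<and>
    (\<forall>\<xi>\<in>l2. l2_inner \<xi> (\<lambda>j. Lop k \<xi> j + Y \<xi> j) \<ge> complex_of_real \<kappa> * l2_inner \<xi> \<xi>)"
proof -
  note bY = assms(1) and pos = assms(2)
  obtain m where m: "m > 0" and mq: "\<And>a. (\<forall>j. j \<ge> k \<longrightarrow> a j = 0) \<Longrightarrow> m * NN a \<le> Re (QQ k Y a)"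
    using fin_min[OF assms] by blast
  obtain C where NY: "\<And>x. x \<in> l2 \<Longrightarrow> NN (Y x) \<le> C^2 * NN x"
    using NN_Y[OF bY] by blast
  define D where "D = C^2 + 1"
  have Dp: "D > 0" and CD: "C^2 \<le> D" unfolding D_def by (auto intro: add_nonneg_pos)
  define E where "E = 3 * D / m"
  have Ep: "E > 0" using Dp m by (simp add: E_def)
  define t where "t = min 1 (1 / (2*E))"
  have tp: "t > 0" and t1: "t \<le> 1" and tE: "t * E \<le> 1/2"
    using m Ep by (auto simp: t_def min_def field_simps)
  define \<kappa> where "\<kappa> = min (t * m / 2) (1/2)"
  have kp: "\<kappa> > 0" using tp m by (simp add: \<kappa>_def)
  show ?thesis
  proof (intro exI[of _ \<kappa>] conjI kp ballI)
    fix \<xi> assume x: "\<xi> \<in> l2"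
    define a where "a = (\<lambda>j. if j < k then \<xi> j else 0)"
    define b where "b = Lop k \<xi>"
    have al: "a \<in> l2" by (rule l2_mono[OF x]) (simp add: a_def)
    have bl: "b \<in> l2" by (rule l2_mono[OF x]) (simp add: b_def Lop_def)
    have xab: "\<xi> = (\<lambda>j. a j + b j)" by (auto simp: a_def b_def Lop_def)
    have Yx: "Y \<xi> = (\<lambda>j. Y a j + Y b j)" by (subst xab) (rule Y_add[OF bY al bl])
    have Yal: "Y a \<in> l2" and Ybl: "Y b \<in> l2" using Y_l2[OF bY] al bl by auto
    have suppa: "\<forall>j. j \<ge> k \<longrightarrow> a j = 0" by (simp add: a_def)
    define X where "X = NN a"
    define Z where "Z = NN b"
    have X0: "X \<ge> 0" unfolding X_def by (rule NN_nonneg[OF al])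
    have Z0: "Z \<ge> 0" unfolding Z_def by (rule NN_nonneg[OF bl])
    have Nx: "NN \<xi> = X + Z"
    proof -
      have "NN \<xi> = (\<Sum>j. (cmod (a j))^2 + (cmod (b j))^2)"
        unfolding NN_def by (rule arg_cong[where f=suminf]) (auto simp: a_def b_def Lop_def)
      also have "\<dots> = X + Z" unfolding X_def Z_def NN_def
        by (rule suminf_add[symmetric]) (use al bl in \<open>auto simp: summable_l2\<close>)
      finally show ?thesis .
    qed
    have qx: "l2_inner \<xi> (Y \<xi>) = l2_inner a (Y a) + l2_inner a (Y b) + (l2_inner b (Y a) + l2_inner b (Y b))"
      unfolding Yx
      apply (subst xab)
      apply (subst inner_add_left[OF al bl])
       apply (rule l2_add[OF Yal Ybl])
      using inner_add_right al bl Yal Ybl by simp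
    have qa: "m * X \<le> Re (l2_inner a (Y a))"
    proof -
      have "l2_inner a (Y a) = QQ k Y a" by (rule q_QQ[OF bY]) (use suppa in auto)
      then show ?thesis using mq[OF suppa] unfolding X_def by simp
    qed
    have qb: "0 \<le> Re (l2_inner b (Y b))" using pos bl by (auto simp: less_eq_complex_def)
    have c1: "cmod (l2_inner a (Y b)) \<le> m/4 * X + D * Z / m"
    proof -
      have "cmod (l2_inner a (Y b)) \<le> (m/2)/2 * X + NN (Y b)/(2*(m/2))"
        unfolding X_def by (rule inner_bound[OF al Ybl]) (use m in simp)
      also have "NN (Y b) \<le> D * Z" using NY[OF bl] CD Z0 unfolding Z_def
        by (meson mult_right_mono order_trans)
      hence "NN (Y b)/(2*(m/2)) \<le> D * Z / m" using m by (simp add: divide_right_mono)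
      finally show ?thesis by simp
    qed
    have c2: "cmod (l2_inner b (Y a)) \<le> 2 * D / m * Z + m/8 * X"
    proof -
      have "cmod (l2_inner b (Y a)) \<le> (4*D/m)/2 * Z + NN (Y a)/(2*(4*D/m))"
        unfolding Z_def by (rule inner_bound[OF bl Yal]) (use m Dp in simp)
      also have "NN (Y a) \<le> D * X" using NY[OF al] CD X0 unfolding X_def
        by (meson mult_right_mono order_trans)
      hence "NN (Y a)/(2*(4*D/m)) \<le> D * X / (2*(4*D/m))" using m Dp by (intro divide_right_mono) auto
      also have "D * X / (2*(4*D/m)) = m/8 * X" using m Dp by (simp add: field_simps)
      finally show ?thesis by simp
    qed
    have "Re (l2_inner a (Y b)) \<ge> - cmod (l2_inner a (Y b))" using abs_Re_le_cmod[of "l2_inner a (Y b)"] by linarith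
    moreover have "Re (l2_inner b (Y a)) \<ge> - cmod (l2_inner b (Y a))" using abs_Re_le_cmod[of "l2_inner b (Y a)"] by linarith
    moreover have "D * Z / m = E * Z / 3" by (simp add: E_def)
    moreover have "2 * D / m * Z = 2 * (E * Z / 3)" by (simp add: E_def)
    moreover have "Re (l2_inner \<xi> (Y \<xi>)) = Re (l2_inner a (Y a)) + Re (l2_inner a (Y b)) + (Re (l2_inner b (Y a)) + Re (l2_inner b (Y b)))"
      using qx by simp
    moreover have "m/2 * X = m * X / 2" "m/4 * X = m * X / 4" "m/8 * X = m * X / 8" by simp_all
    moreover have "0 \<le> m * X" using m X0 by simp
    ultimately have R1: "Re (l2_inner \<xi> (Y \<xi>)) \<ge> m/2 * X - E * Z"
      using qa qb c1 c2 by (rule lin_aux)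
    have R0: "Re (l2_inner \<xi> (Y \<xi>)) \<ge> 0" and I0: "Im (l2_inner \<xi> (Y \<xi>)) = 0"
      using pos x by (auto simp: less_eq_complex_def)
    define R where "R = Re (l2_inner \<xi> (Y \<xi>))"
    have "t * (m/2 * X - E * Z) \<le> t * R" using R1 tp unfolding R_def by (simp add: mult_left_mono)
    also have "t * R \<le> R" unfolding R_def by (rule mult_left_le_one_le) (use R0 tp t1 in auto)
    finally have R2: "t * m / 2 * X - (t * E) * Z \<le> R" by (simp add: algebra_simps)
    have "(t*E) * Z \<le> 1/2 * Z" using tE Z0 by (rule mult_right_mono)
    with R2 have R3: "t * m / 2 * X + 1/2 * Z \<le> Z + R" by linarith
    have "\<kappa> * (X + Z) = \<kappa> * X + \<kappa> * Z" by (simp add: algebra_simps)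
    also have "\<dots> \<le> t * m / 2 * X + 1/2 * Z"
      using X0 Z0 by (intro add_mono mult_right_mono) (auto simp: \<kappa>_def)
    finally have "\<kappa> * (X + Z) \<le> Z + R" using R3 by linarith
    hence fin: "\<kappa> * NN \<xi> \<le> Z + R" by (simp only: Nx)
    have lhs: "l2_inner \<xi> (\<lambda>j. Lop k \<xi> j + Y \<xi> j) = complex_of_real Z + l2_inner \<xi> (Y \<xi>)"
      using inner_add_right[OF x _ Y_l2[OF bY x], of "Lop k \<xi>"] bl Lop_inner[OF x, of k]
      unfolding b_def Z_def by simp
    show "complex_of_real \<kappa> * l2_inner \<xi> \<xi> \<le> l2_inner \<xi> (\<lambda>j. Lop k \<xi> j + Y \<xi> j)"
      unfolding lhs inner_self[OF x] using fin I0 unfolding R_def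
      by (simp add: less_eq_complex_def)
  qed
qed

end
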